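(* Let $A$ be an associative algebra (with identity) over a field $\mathbf{k}$, let $q\in A$ be an idempotent, let $(A,q):=\{x\in A\mid qxq=qx\}$, and fix $k\in\mathbf{k}$. Then $(A,q)$ is a Lie algebra under the bracket $$[x,y]_{6,k}:=xy-yx-xyq+yxq+kxqy-kyqx,\qquad x,y\in(A,q).$$
   Context: $(A,q)$ is the (right) invariant algebra induced by the idempotent $q$; it is a subalgebra of $A$. The resulting Lie algebra is denoted $Lie((A,q),[\,,\,]_{6,k})$. *)

theory Defs
  imports Main "HOL.Vector_Spaces"
begin

definition assoc_algebra :: "('k::field \<Rightarrow> 'a::ring_1 \<Rightarrow> 'a) \<Rightarrow> bool" where
  "assoc_algebra scale \<longleftrightarrow> vector_space scale \<and>
     (\<forall>c x y. scale c (x * y) = scale c x * y) \<and>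
     (\<forall>c x y. scale c (x * y) = x * scale c y)"

definition inv_alg :: "'a::ring_1 \<Rightarrow> 'a set" where
  "inv_alg q = {x. q * x * q = q * x}"

definition bracket6 :: "('k \<Rightarrow> 'a::ring_1 \<Rightarrow> 'a) \<Rightarrow> 'k \<Rightarrow> 'a \<Rightarrow> 'a \<Rightarrow> 'a \<Rightarrow> 'a" where
  "bracket6 scale k q x y =
     x * y - y * x - x * y * q + y * x * q + scale k (x * q * y) - scale k (y * q * x)"

definition lie_algebra_on ::
  "('k::field \<Rightarrow> 'a::ab_group_add \<Rightarrow> 'a) \<Rightarrow> 'a set \<Rightarrow> ('a \<Rightarrow> 'a \<Rightarrow> 'a) \<Rightarrow> bool" where
  "lie_algebra_on scale L br \<longleftrightarrow>
     module.subspace scale L \<and>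
     (\<forall>x\<in>L. \<forall>y\<in>L. br x y \<in> L) \<and>
     (\<forall>a b. \<forall>x\<in>L. \<forall>y\<in>L. \<forall>z\<in>L.
        br (scale a x + scale b y) z = scale a (br x z) + scale b (br y z)) \<and>
     (\<forall>a b. \<forall>x\<in>L. \<forall>y\<in>L. \<forall>z\<in>L.
        br z (scale a x + scale b y) = scale a (br z x) + scale b (br z y)) \<and>
     (\<forall>x\<in>L. br x x = 0) \<and>
     (\<forall>x\<in>L. \<forall>y\<in>L. \<forall>z\<in>L. br x (br y z) + br y (br z x) + br z (br x y) = 0)"

end

theory Submission
  imports Defs
begin

definition bb :: "'a::ring_1 \<Rightarrow> 'a \<Rightarrow> 'a \<Rightarrow> 'a \<Rightarrow> 'a" where
  "bb q c u v = u*v - v*u - u*v*q + v*u*q + c*(u*q*v) - c*(v*q*u)"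

locale jac =
  fixes q c x y z :: "'a::ring_1" and S :: "'a set"
  assumes qq: "q*q = q"
  and S: "\<And>a. a \<in> S \<Longrightarrow> q*a*q = q*a"
  and SM: "\<And>a b. a \<in> S \<Longrightarrow> b \<in> S \<Longrightarrow> a*b \<in> S"
  and cc: "\<And>u. c*u = u*c"
  and xS: "x \<in> S" and yS: "y \<in> S" and zS: "z \<in> S"
begin
lemma qq2: "q*(q*w) = q*w" by (simp add: qq flip: mult.assoc)
lemma L1: "a\<in>S \<Longrightarrow> q*(a*q) = q*a" using S by (simp add: mult.assoc)
lemma L1t: "a\<in>S \<Longrightarrow> q*(a*(q*w)) = q*(a*w)"
  using S[of a] by (metis mult.assoc)
lemma L2: "a\<in>S \<Longrightarrow> b\<in>S \<Longrightarrow> q*(a*(b*q)) = q*(a*b)"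
  using S[OF SM[of a b]] by (simp add: mult.assoc)
lemma L2t: "a\<in>S \<Longrightarrow> b\<in>S \<Longrightarrow> q*(a*(b*(q*w))) = q*(a*(b*w))"
  using S[OF SM[of a b]] by (metis mult.assoc)
lemma L3: "a\<in>S \<Longrightarrow> b\<in>S \<Longrightarrow> d\<in>S \<Longrightarrow> q*(a*(b*(d*q))) = q*(a*(b*d))"
  using S[OF SM[OF SM[of a b] , of d]] by (simp add: mult.assoc)
lemma L3t: "a\<in>S \<Longrightarrow> b\<in>S \<Longrightarrow> d\<in>S \<Longrightarrow> q*(a*(b*(d*(q*w)))) = q*(a*(b*(d*w)))"
  using S[OF SM[OF SM[of a b] , of d]] by (metis mult.assoc)
lemma C1: "a*c = c*a" using cc by simp
lemma C2: "a*(c*w) = c*(a*w)" by (metis cc mult.assoc)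

lemmas R = qq qq2 L1 L1t L2 L2t L3 L3t xS yS zS
  C1[of x] C1[of y] C1[of z] C1[of q] C2[of x] C2[of y] C2[of z] C2[of q]

abbreviation "b \<equiv> bb q c"

lemma jacobi: "b x (b y z) + b y (b z x) + b z (b x y) = 0"
  unfolding bb_def by (simp add: algebra_simps R)

lemma closed: "q * b x y * q = q * b x y"
  unfolding bb_def by (simp add: algebra_simps R)
end


lemma bil:
  fixes ca cb ck x y z q :: "'a::ring_1"
  assumes ca: "\<And>u. ca*u = u*ca" and cb: "\<And>u. cb*u = u*cb" and ck: "\<And>u. ck*u = u*ck"
  shows "(ca*x+cb*y)*z - z*(ca*x+cb*y) - (ca*x+cb*y)*z*q + z*(ca*x+cb*y)*q
      + ck*((ca*x+cb*y)*q*z) - ck*(z*q*(ca*x+cb*y))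
   = ca*(x*z - z*x - x*z*q + z*x*q + ck*(x*q*z) - ck*(z*q*x))
   + cb*(y*z - z*y - y*z*q + z*y*q + ck*(y*q*z) - ck*(z*q*y))"
proof -
  have A: "\<And>u w. u*(ca*w) = ca*(u*w)" "\<And>u w. u*(cb*w) = cb*(u*w)"
    "\<And>u. u*ca = ca*u" "\<And>u. u*cb = cb*u"
    "\<And>w. ck*(ca*w) = ca*(ck*w)" "\<And>w. ck*(cb*w) = cb*(ck*w)"
    by (metis ca cb ck mult.assoc)+
  show ?thesis by (simp add: algebra_simps A)
qed

lemma bil2:
  fixes ca cb ck x y z q :: "'a::ring_1"
  assumes ca: "\<And>u. ca*u = u*ca" and cb: "\<And>u. cb*u = u*cb" and ck: "\<And>u. ck*u = u*ck"
  shows "z*(ca*x+cb*y) - (ca*x+cb*y)*z - z*(ca*x+cb*y)*q + (ca*x+cb*y)*z*q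
      + ck*(z*q*(ca*x+cb*y)) - ck*((ca*x+cb*y)*q*z)
   = ca*(z*x - x*z - z*x*q + x*z*q + ck*(z*q*x) - ck*(x*q*z))
   + cb*(z*y - y*z - z*y*q + y*z*q + ck*(z*q*y) - ck*(y*q*z))"
proof -
  have A: "\<And>u w. u*(ca*w) = ca*(u*w)" "\<And>u w. u*(cb*w) = cb*(u*w)"
    "\<And>u. u*ca = ca*u" "\<And>u. u*cb = cb*u"
    "\<And>w. ck*(ca*w) = ca*(ck*w)" "\<And>w. ck*(cb*w) = cb*(ck*w)"
    by (metis ca cb ck mult.assoc)+
  show ?thesis by (simp add: algebra_simps A)
qed

theorem proposition1p2:
  fixes scale :: "'k::field \<Rightarrow> 'a::ring_1 \<Rightarrow> 'a" and q :: 'a and k :: 'k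
  assumes "assoc_algebra scale"
    and "q * q = q"
  shows "lie_algebra_on scale (inv_alg q) (bracket6 scale k q)"
proof -
  have vs: "vector_space scale" and m1: "\<And>c x y. scale c (x * y) = scale c x * y"
    and m2: "\<And>c x y. scale c (x * y) = x * scale c y"
    using assms(1) unfolding assoc_algebra_def by auto
  interpret vector_space scale by (rule vs)
  have sc: "\<And>a u. scale a u = scale a 1 * u" by (metis m1 mult_1_left)
  have cen: "\<And>a u. scale a 1 * u = u * scale a 1" by (metis m1 m2 mult_1_left mult_1_right)
  define S where "S = inv_alg q"
  have SM: "\<And>a b. a \<in> S \<Longrightarrow> b \<in> S \<Longrightarrow> a*b \<in> S"
    unfolding S_def inv_alg_def by (simp, metis mult.assoc)
  have Sq: "\<And>a. a \<in> S \<Longrightarrow> q*a*q = q*a" unfolding S_def inv_alg_def by simp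
  have br: "\<And>u v. bracket6 scale k q u v = bb q (scale k 1) u v"
    unfolding bracket6_def bb_def by (metis sc)
  have J: "\<And>x y z. x\<in>S \<Longrightarrow> y\<in>S \<Longrightarrow> z\<in>S \<Longrightarrow> jac q (scale k 1) x y z S"
    by (unfold_locales, auto simp: assms(2) Sq SM cen)
  have sub: "subspace S"
    unfolding subspace_def S_def inv_alg_def
    by (auto simp: algebra_simps) (metis m1 m2 mult.assoc)
  show ?thesis
    unfolding lie_algebra_on_def S_def[symmetric]
  proof (intro conjI ballI allI)
    show "subspace S" by (rule sub)
  next
    fix x y assume "x\<in>S" "y\<in>S"
    then show "bracket6 scale k q x y \<in> S"
      using jac.closed[OF J[of x y x]] br unfolding S_def inv_alg_def by auto
  next
    fix a b x y z assume "x\<in>S" "y\<in>S" "z\<in>S"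
    show "bracket6 scale k q (scale a x + scale b y) z =
       scale a (bracket6 scale k q x z) + scale b (bracket6 scale k q y z)"
      unfolding br sc[of a x] sc[of b y] sc[of a "bb q (scale k 1) x z"] sc[of b "bb q (scale k 1) y z"]
      unfolding bb_def
      using bil[of "scale a 1" "scale b 1" "scale k 1" x y z q, OF cen cen cen] by (simp add: mult.assoc)
  next
    fix a b x y z assume "x\<in>S" "y\<in>S" "z\<in>S"
    show "bracket6 scale k q z (scale a x + scale b y) =
       scale a (bracket6 scale k q z x) + scale b (bracket6 scale k q z y)"
      unfolding br sc[of a x] sc[of b y] sc[of a "bb q (scale k 1) z x"] sc[of b "bb q (scale k 1) z y"]
      unfolding bb_def
      using bil2[of "scale a 1" "scale b 1" "scale k 1" z x y q, OF cen cen cen] by (simp add: mult.assoc)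
  next
    fix x assume "x\<in>S"
    show "bracket6 scale k q x x = 0" unfolding bracket6_def by simp
  next
    fix x y z assume "x\<in>S" "y\<in>S" "z\<in>S"
    then show "bracket6 scale k q x (bracket6 scale k q y z) + bracket6 scale k q y (bracket6 scale k q z x) +
       bracket6 scale k q z (bracket6 scale k q x y) = 0"
      using jac.jacobi[OF J] br by simp
  qed
qed

end
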